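(* Let $(\mathcal{A},[\cdot,\cdot],\varepsilon,\alpha)$ be a multiplicative color Hom-Lie algebra and $(M,[\cdot,\cdot]_M,\beta)$ an $\mathcal{A}$-module. Then for all integers $n\ge 2$ and $r\ge 1$, $\delta^n_r\circ\delta^{n-1}_r=0$ on $C^{n-1}_{\alpha,\beta}(\mathcal{A},M)$; i.e. $(\bigoplus_{n\ge 0}C^n_{\alpha,\beta}(\mathcal{A},M),\delta_r)$ is a cochain complex.
   Context: Let $\mathbb{K}$ be a field of characteristic $0$, $\Gamma$ an abelian group and $\varepsilon:\Gamma\times\Gamma\to\mathbb{K}^*$ a skew-symmetric bicharacter ($\varepsilon(a,b)\varepsilon(b,a)=1$, $\varepsilon(a,b+c)=\varepsilon(a,b)\varepsilon(a,c)$, $\varepsilon(a+b,c)=\varepsilon(a,c)\varepsilon(b,c)$); for homogeneous $x,y$, $\varepsilon(x,y)=\varepsilon(\bar x,\bar y)$ with $\bar x$ the degree, and for sums of elements $\varepsilon(x_1+\dots+x_k,y)$ means $\varepsilon(\bar x_1+\dots+\bar x_k,\bar y)$. A color Hom-Lie algebra is $(\mathcal{A},[\cdot,\cdot],\varepsilon,\alpha)$ with $\mathcal{A}$ a $\Gamma$-graded vector space, $[\cdot,\cdot]$ bilinear with $[\mathcal{A}_a,\mathcal{A}_b]\subseteq\mathcal{A}_{a+b}$, $\alpha$ even linear, $[x,y]=-\varepsilon(x,y)[y,x]$ and $\varepsilon(z,x)[\alpha(x),[y,z]]+\varepsilon(x,y)[\alpha(y),[z,x]]+\varepsilon(y,z)[\alpha(z),[x,y]]=0$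 for homogeneous $x,y,z$; it is multiplicative if $\alpha([x,y])=[\alpha(x),\alpha(y)]$. An $\mathcal{A}$-module is a triple $(M,[\cdot,\cdot]_M,\beta)$ with $M$ a $\Gamma$-graded vector space, $\beta:M\to M$ even linear and $[\cdot,\cdot]_M:\mathcal{A}\times M\to M$ bilinear with $[\mathcal{A}_a,M_b]\subseteq M_{a+b}$, such that $\beta([x,m]_M)=[\alpha(x),\beta(m)]_M$ and $[[x,y],\beta(m)]_M=[\alpha(x),[y,m]_M]_M-\varepsilon(x,y)[\alpha(y),[x,m]_M]_M$ for homogeneous $x,y$ and $m\in M$. $C^n(\mathcal{A},M)$ is the space of $n$-linear maps $f:\mathcal{A}^n\to M$ with $f(\dots,x_i,x_{i+1},\dots)=-\varepsilon(x_i,x_{i+1})f(\dots,x_{i+1},x_i,\dots)$ for homogeneous arguments; $f$ has degree $\gamma$ if it maps arguments of degrees $a_1,\dots,a_n$ into $M_{\gamma+a_1+\dots+a_n}$. $C^n_{\alpha,\beta}(\mathcal{A},M)=\{f\in C^n(\mathcal{A},M): f(\alpha(x_1),\dots,\alpha(x_n))=\beta(f(x_1,\dots,x_n))\}$. For $f\in C^n_{\alpha,\beta}(\mathcal{A},M)$ homogeneous of degree $\gamma$ and homogeneous $x_0,\dots,x_n$, define (and extend linearly) $$\delta^n_r(f)(x_0,\dots,x_n)=\sum_{0\le s<t\le n}(-1)^t\varepsilon(x_{s+1}+\dots+x_{t-1},x_t)\,f\big(\alpha(x_0),\dots,\alpha(x_{s-1}),[x_s,x_t],\alpha(x_{s+1}),\dots,\widehat{x_t},\dots,\alpha(x_n)\big)$$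 $$+\sum_{s=0}^n(-1)^s\varepsilon(\gamma+x_0+\dots+x_{s-1},x_s)\,[\alpha^{r+n-1}(x_s),f(x_0,\dots,\widehat{x_s},\dots,x_n)]_M,$$ where $\widehat{\cdot}$ denotes omission. *)

theory Defs
  imports Main "HOL.Vector_Spaces"
begin

definition graded_space :: "('k::field \<Rightarrow> 'v::ab_group_add \<Rightarrow> 'v) \<Rightarrow> ('g \<Rightarrow> 'v set) \<Rightarrow> bool" where
  "graded_space scale G \<longleftrightarrow>
     vector_space scale \<and>
     (\<forall>g. 0 \<in> G g \<and> (\<forall>x\<in>G g. \<forall>y\<in>G g. x + y \<in> G g) \<and> (\<forall>c. \<forall>x\<in>G g. scale c x \<in> G g)) \<and>
     (\<forall>x. \<exists>c. finite {g. c g \<noteq> 0} \<and> (\<forall>g. c g \<in> G g) \<and> x = (\<Sum>g\<in>{g. c g \<noteq> 0}. c g)) \<and>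
     (\<forall>c S. finite S \<and> (\<forall>g. c g \<in> G g) \<and> (\<Sum>g\<in>S. c g) = 0 \<longrightarrow> (\<forall>g\<in>S. c g = 0))"

definition homogeneous :: "('g \<Rightarrow> 'v set) \<Rightarrow> 'v \<Rightarrow> bool" where
  "homogeneous G x \<longleftrightarrow> (\<exists>g. x \<in> G g)"

text \<open>Degree of a homogeneous element (for 0 an arbitrary degree containing it is chosen;
  every formula below is insensitive to that choice).\<close>
definition deg :: "('g \<Rightarrow> 'v set) \<Rightarrow> 'v \<Rightarrow> 'g" where
  "deg G x = (SOME g. x \<in> G g)"

definition even_linear :: "('k::field \<Rightarrow> 'v::ab_group_add \<Rightarrow> 'v) \<Rightarrow> ('g \<Rightarrow> 'v set) \<Rightarrow> ('v \<Rightarrow> 'v) \<Rightarrow> bool" where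
  "even_linear scale G f \<longleftrightarrow> Vector_Spaces.linear scale scale f \<and> (\<forall>g x. x \<in> G g \<longrightarrow> f x \<in> G g)"

definition skew_bicharacter :: "('g::ab_group_add \<Rightarrow> 'g \<Rightarrow> 'k::field) \<Rightarrow> bool" where
  "skew_bicharacter eps \<longleftrightarrow>
     (\<forall>a b. eps a b \<noteq> 0) \<and>
     (\<forall>a b. eps a b * eps b a = 1) \<and>
     (\<forall>a b c. eps a (b + c) = eps a b * eps a c) \<and>
     (\<forall>a b c. eps (a + b) c = eps a c * eps b c)"

definition color_hom_lie_algebra ::
  "('k::field \<Rightarrow> 'a::ab_group_add \<Rightarrow> 'a) \<Rightarrow> ('g::ab_group_add \<Rightarrow> 'a set) \<Rightarrow>
   ('a \<Rightarrow> 'a \<Rightarrow> 'a) \<Rightarrow> ('g \<Rightarrow> 'g \<Rightarrow> 'k) \<Rightarrow> ('a \<Rightarrow> 'a) \<Rightarrow> bool" where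
  "color_hom_lie_algebra sA GA br eps alpha \<longleftrightarrow>
     graded_space sA GA \<and> skew_bicharacter eps \<and> even_linear sA GA alpha \<and>
     (\<forall>x. Vector_Spaces.linear sA sA (br x)) \<and> (\<forall>y. Vector_Spaces.linear sA sA (\<lambda>x. br x y)) \<and>
     (\<forall>a b x y. x \<in> GA a \<longrightarrow> y \<in> GA b \<longrightarrow> br x y \<in> GA (a + b)) \<and>
     (\<forall>a b x y. x \<in> GA a \<longrightarrow> y \<in> GA b \<longrightarrow> br x y = - sA (eps a b) (br y x)) \<and>
     (\<forall>a b c x y z. x \<in> GA a \<longrightarrow> y \<in> GA b \<longrightarrow> z \<in> GA c \<longrightarrow>
        sA (eps c a) (br (alpha x) (br y z)) + sA (eps a b) (br (alpha y) (br z x))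
        + sA (eps b c) (br (alpha z) (br x y)) = 0)"

definition multiplicative :: "('a \<Rightarrow> 'a \<Rightarrow> 'a) \<Rightarrow> ('a \<Rightarrow> 'a) \<Rightarrow> bool" where
  "multiplicative br alpha \<longleftrightarrow> (\<forall>x y. alpha (br x y) = br (alpha x) (alpha y))"

definition hom_lie_module ::
  "('k::field \<Rightarrow> 'a::ab_group_add \<Rightarrow> 'a) \<Rightarrow> ('g::ab_group_add \<Rightarrow> 'a set) \<Rightarrow>
   ('a \<Rightarrow> 'a \<Rightarrow> 'a) \<Rightarrow> ('g \<Rightarrow> 'g \<Rightarrow> 'k) \<Rightarrow> ('a \<Rightarrow> 'a) \<Rightarrow>
   ('k \<Rightarrow> 'm::ab_group_add \<Rightarrow> 'm) \<Rightarrow> ('g \<Rightarrow> 'm set) \<Rightarrow> ('a \<Rightarrow> 'm \<Rightarrow> 'm) \<Rightarrow> ('m \<Rightarrow> 'm) \<Rightarrow> bool" where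
  "hom_lie_module sA GA br eps alpha sM GM act beta \<longleftrightarrow>
     graded_space sM GM \<and> even_linear sM GM beta \<and>
     (\<forall>x. Vector_Spaces.linear sM sM (act x)) \<and> (\<forall>m. Vector_Spaces.linear sA sM (\<lambda>x. act x m)) \<and>
     (\<forall>a b x m. x \<in> GA a \<longrightarrow> m \<in> GM b \<longrightarrow> act x m \<in> GM (a + b)) \<and>
     (\<forall>a x m. x \<in> GA a \<longrightarrow> beta (act x m) = act (alpha x) (beta m)) \<and>
     (\<forall>a b x y m. x \<in> GA a \<longrightarrow> y \<in> GA b \<longrightarrow>
        act (br x y) (beta m) = act (alpha x) (act y m) - sM (eps a b) (act (alpha y) (act x m)))"

text \<open>An n-cochain is a map f on argument sequences (nat \<Rightarrow> 'a); only the first n arguments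
  x 0, ..., x (n-1) matter.\<close>
definition cochain_deg ::
  "('k::field \<Rightarrow> 'a::ab_group_add \<Rightarrow> 'a) \<Rightarrow> ('g::ab_group_add \<Rightarrow> 'a set) \<Rightarrow> ('g \<Rightarrow> 'g \<Rightarrow> 'k) \<Rightarrow>
   ('k \<Rightarrow> 'm::ab_group_add \<Rightarrow> 'm) \<Rightarrow> ('g \<Rightarrow> 'm set) \<Rightarrow> nat \<Rightarrow> 'g \<Rightarrow> ((nat \<Rightarrow> 'a) \<Rightarrow> 'm) \<Rightarrow> bool" where
  "cochain_deg sA GA eps sM GM n \<gamma> f \<longleftrightarrow>
     (\<forall>x y. (\<forall>i<n. x i = y i) \<longrightarrow> f x = f y) \<and>
     (\<forall>i<n. \<forall>x. Vector_Spaces.linear sA sM (\<lambda>v. f (x(i := v)))) \<and>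
     (\<forall>i x d. Suc i < n \<longrightarrow> (\<forall>j<n. x j \<in> GA (d j)) \<longrightarrow>
        f x = - sM (eps (d i) (d (Suc i))) (f (x(i := x (Suc i), Suc i := x i)))) \<and>
     (\<forall>x d. (\<forall>j<n. x j \<in> GA (d j)) \<longrightarrow> f x \<in> GM (\<gamma> + (\<Sum>j<n. d j)))"

definition alpha_beta_compatible :: "('a \<Rightarrow> 'a) \<Rightarrow> ('m \<Rightarrow> 'm) \<Rightarrow> ((nat \<Rightarrow> 'a) \<Rightarrow> 'm) \<Rightarrow> bool" where
  "alpha_beta_compatible alpha beta f \<longleftrightarrow> (\<forall>x. f (alpha \<circ> x) = beta (f x))"

definition bracket_args :: "('a \<Rightarrow> 'a \<Rightarrow> 'a) \<Rightarrow> ('a \<Rightarrow> 'a) \<Rightarrow> nat \<Rightarrow> nat \<Rightarrow> (nat \<Rightarrow> 'a) \<Rightarrow> nat \<Rightarrow> 'a" where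
  "bracket_args br alpha s t x = (\<lambda>k. if k < s then alpha (x k)
                                      else if k = s then br (x s) (x t)
                                      else if k < t then alpha (x k)
                                      else alpha (x (Suc k)))"

definition omit_arg :: "nat \<Rightarrow> (nat \<Rightarrow> 'a) \<Rightarrow> nat \<Rightarrow> 'a" where
  "omit_arg s x = (\<lambda>k. if k < s then x k else x (Suc k))"

definition coboundary ::
  "('g::ab_group_add \<Rightarrow> 'a set) \<Rightarrow> ('a \<Rightarrow> 'a \<Rightarrow> 'a) \<Rightarrow> ('g \<Rightarrow> 'g \<Rightarrow> 'k::field) \<Rightarrow> ('a \<Rightarrow> 'a) \<Rightarrow>
   ('k \<Rightarrow> 'm::ab_group_add \<Rightarrow> 'm) \<Rightarrow> ('a \<Rightarrow> 'm \<Rightarrow> 'm) \<Rightarrow> nat \<Rightarrow> nat \<Rightarrow> 'g \<Rightarrow>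
   ((nat \<Rightarrow> 'a) \<Rightarrow> 'm) \<Rightarrow> (nat \<Rightarrow> 'a) \<Rightarrow> 'm" where
  "coboundary GA br eps alpha sM act r n \<gamma> f x =
     (\<Sum>t\<in>{..n}. \<Sum>s<t.
        sM ((-1) ^ t * eps (\<Sum>k\<in>{s<..<t}. deg GA (x k)) (deg GA (x t)))
           (f (bracket_args br alpha s t x)))
   + (\<Sum>s\<in>{..n}.
        sM ((-1) ^ s * eps (\<gamma> + (\<Sum>k<s. deg GA (x k))) (deg GA (x s)))
           (act ((alpha ^^ (r + n - 1)) (x s)) (f (omit_arg s x))))"

end

theory Submission
  imports Defs
begin


locale CHL =
  fixes sA :: "'k::field_char_0 \<Rightarrow> 'a::ab_group_add \<Rightarrow> 'a"
    and GA :: "'g::ab_group_add \<Rightarrow> 'a set"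
    and br :: "'a \<Rightarrow> 'a \<Rightarrow> 'a"
    and eps :: "'g \<Rightarrow> 'g \<Rightarrow> 'k"
    and alpha :: "'a \<Rightarrow> 'a"
    and sM :: "'k \<Rightarrow> 'm::ab_group_add \<Rightarrow> 'm"
    and GM :: "'g \<Rightarrow> 'm set"
    and act :: "'a \<Rightarrow> 'm \<Rightarrow> 'm"
    and beta :: "'m \<Rightarrow> 'm"
  assumes L: "color_hom_lie_algebra sA GA br eps alpha"
    and Mu: "multiplicative br alpha"
    and Mo: "hom_lie_module sA GA br eps alpha sM GM act beta"
begin

lemma vsA: "vector_space sA" using L unfolding color_hom_lie_algebra_def graded_space_def by auto
lemma vsM: "vector_space sM" using Mo unfolding hom_lie_module_def graded_space_def by auto

sublocale M: vector_space sM by (rule vsM)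

lemma skew: "skew_bicharacter eps" using L unfolding color_hom_lie_algebra_def by blast

lemma eps_nz[simp]: "eps a b \<noteq> 0" using skew unfolding skew_bicharacter_def by auto
lemma eps_add_l: "eps (a + b) c = eps a c * eps b c" using skew unfolding skew_bicharacter_def by auto
lemma eps_add_r: "eps a (b + c) = eps a b * eps a c" using skew unfolding skew_bicharacter_def by auto
lemma eps_sw: "eps a b * eps b a = 1" using skew unfolding skew_bicharacter_def by auto
lemma eps_0l[simp]: "eps 0 c = 1"
proof -
  have "eps 0 c = eps 0 c * eps 0 c" using eps_add_l[of 0 0 c] by simp
  thus ?thesis using eps_nz[of 0 c] by (metis mult_cancel_left1)
qed
lemma eps_minus_l: "eps (- a) c = inverse (eps a c)"
proof -
  have "eps (a + - a) c = 1" by simp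
  hence "eps a c * eps (-a) c = 1" by (simp only: eps_add_l)
  thus ?thesis by (simp add: field_simps)
qed
lemma eps_diff_l: "eps (a - b) c = eps a c / eps b c"
  using eps_add_l[of a "-b" c] eps_minus_l[of b c] by (simp add: field_simps)
lemma eps_swap: "eps b a = inverse (eps a b)"
  using eps_sw[of a b] by (simp add: field_simps)

lemma alpha_lin: "Vector_Spaces.linear sA sA alpha" and alpha_deg: "x \<in> GA g \<Longrightarrow> alpha x \<in> GA g"
  using L unfolding color_hom_lie_algebra_def even_linear_def by auto
lemma alpha_add: "alpha (x + y) = alpha x + alpha y" and alpha_scale: "alpha (sA c x) = sA c (alpha x)"
  using alpha_lin unfolding linear_iff by auto
lemma alpha_0[simp]: "alpha 0 = 0" using alpha_add[of 0 0] by simp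
lemma alpha_pow_0[simp]: "(alpha ^^ j) 0 = 0" by (induct j) auto
lemma alpha_pow_deg: "x \<in> GA g \<Longrightarrow> (alpha ^^ j) x \<in> GA g" by (induct j) (auto intro: alpha_deg)

lemma br_lin_r: "br x (y + z) = br x y + br x z" "br x (sA c y) = sA c (br x y)"
  using L unfolding color_hom_lie_algebra_def linear_iff by auto
lemma br_lin_l: "br (y + z) x = br y x + br z x" "br (sA c y) x = sA c (br y x)"
  using L unfolding color_hom_lie_algebra_def linear_iff by auto
lemma br_0[simp]: "br x 0 = 0" "br 0 x = 0"
proof -
  have "br x 0 = br x 0 + br x 0" using br_lin_r(1)[of x 0 0] by simp
  thus "br x 0 = 0" by simp
  have "br 0 x = br 0 x + br 0 x" using br_lin_l(1)[of 0 0 x] by simp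
  thus "br 0 x = 0" by simp
qed
lemma br_deg: "x \<in> GA a \<Longrightarrow> y \<in> GA b \<Longrightarrow> br x y \<in> GA (a + b)"
  using L unfolding color_hom_lie_algebra_def by blast
lemma br_skew: "x \<in> GA a \<Longrightarrow> y \<in> GA b \<Longrightarrow> br x y = - sA (eps a b) (br y x)"
  using L unfolding color_hom_lie_algebra_def by blast
lemma jacobi0: "\<forall>a b c x y z. x \<in> GA a \<longrightarrow> y \<in> GA b \<longrightarrow> z \<in> GA c \<longrightarrow>
  sA (eps c a) (br (alpha x) (br y z)) + sA (eps a b) (br (alpha y) (br z x))
        + sA (eps b c) (br (alpha z) (br x y)) = 0"
  using L unfolding color_hom_lie_algebra_def by (elim conjE) assumption
lemmas jacobi = jacobi0[rule_format]
lemma mult: "alpha (br x y) = br (alpha x) (alpha y)" using Mu unfolding multiplicative_def by auto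
lemma mult_pow: "(alpha ^^ j) (br x y) = br ((alpha ^^ j) x) ((alpha ^^ j) y)"
  by (induct j) (auto simp: mult)

lemma act_r: "act x (m + m') = act x m + act x m'" "act x (sM c m) = sM c (act x m)"
  using Mo unfolding hom_lie_module_def linear_iff by auto
lemma act_l: "act (x + y) m = act x m + act y m" "act (sA c x) m = sM c (act x m)"
  using Mo unfolding hom_lie_module_def linear_iff by auto
lemma act_0[simp]: "act x 0 = 0" "act 0 m = 0"
proof -
  have "act x 0 = act x 0 + act x 0" using act_r(1)[of x 0 0] by simp
  thus "act x 0 = 0" by simp
  have "act 0 m = act 0 m + act 0 m" using act_l(1)[of 0 0 m] by simp
  thus "act 0 m = 0" by simp
qed
lemma act_sum: "act x (sum g A) = (\<Sum>i\<in>A. act x (g i))"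
  by (induct A rule: infinite_finite_induct) (auto simp: act_r)
lemma act_neg: "act x (- m) = - act x m"
proof -
  have "act x (- m) + act x m = 0" by (metis act_r(1) act_0(1) add.left_inverse)
  thus ?thesis by (simp add: eq_neg_iff_add_eq_0)
qed
lemma modid0: "\<forall>a b x y m. x \<in> GA a \<longrightarrow> y \<in> GA b \<longrightarrow>
        act (br x y) (beta m) = act (alpha x) (act y m) - sM (eps a b) (act (alpha y) (act x m))"
  using Mo unfolding hom_lie_module_def by (elim conjE) assumption
lemmas modid = modid0[rule_format]

lemma GA_indep0: "\<forall>c S. finite S \<and> (\<forall>g. c g \<in> GA g) \<and> (\<Sum>g\<in>S. c g) = 0 \<longrightarrow> (\<forall>g\<in>S. c g = 0)"
  using L unfolding color_hom_lie_algebra_def graded_space_def by (elim conjE) assumption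
lemma GA_indep: "finite S \<Longrightarrow> (\<forall>g. c g \<in> GA g) \<Longrightarrow> (\<Sum>g\<in>S. c g) = 0 \<Longrightarrow> g\<in>S \<Longrightarrow> c g = 0"
  using GA_indep0 by simp
lemma GA_0: "0 \<in> GA g"
  using L unfolding color_hom_lie_algebra_def graded_space_def by simp

lemma GA_uniq: assumes "x \<in> GA a" "x \<in> GA b" "x \<noteq> 0" shows "a = b"
proof (rule ccontr)
  assume ab: "a \<noteq> b"
  define c where "c = (\<lambda>g. if g = a then x else if g = b then - x else 0)"
  have "\<forall>g. c g \<in> GA g"
  proof
    fix g
    have "\<forall>c. \<forall>x\<in>GA b. sA c x \<in> GA b" using L unfolding color_hom_lie_algebra_def graded_space_def
      by simp
    hence "sA (-1) x \<in> GA b" using assms(2) by blast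
    moreover have "sA (-1) x = - x" using vsA unfolding module_iff_vector_space[symmetric]
      by (metis module.scale_minus_left module.scale_one)
    ultimately have "- x \<in> GA b" by simp
    thus "c g \<in> GA g" using assms GA_0 unfolding c_def by auto
  qed
  moreover have "(\<Sum>g\<in>{a,b}. c g) = 0" using ab unfolding c_def by simp
  ultimately have "c a = 0" using GA_indep[of "{a,b}" c a] by auto
  thus False using assms(3) unfolding c_def by simp
qed

lemma deg_eq: "x \<in> GA a \<Longrightarrow> x \<noteq> 0 \<Longrightarrow> deg GA x = a"
  unfolding deg_def by (rule some_equality) (auto intro: GA_uniq)

end



context CHL begin

definition cobD :: "nat \<Rightarrow> nat \<Rightarrow> 'g \<Rightarrow> (nat \<Rightarrow> 'g) \<Rightarrow> ((nat\<Rightarrow>'a)\<Rightarrow>'m) \<Rightarrow> (nat \<Rightarrow> 'a) \<Rightarrow> 'm" where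
"cobD r m \<gamma> e F y = (\<Sum>t\<in>{..m}. \<Sum>s<t. sM ((-1)^t * eps (\<Sum>k\<in>{s<..<t}. e k) (e t)) (F (bracket_args br alpha s t y)))
   + (\<Sum>s\<in>{..m}. sM ((-1)^s * eps (\<gamma> + (\<Sum>k<s. e k)) (e s)) (act ((alpha^^(r+m-1)) (y s)) (F (omit_arg s y))))"

lemma cob_eq: "coboundary GA br eps alpha sM act r m \<gamma> F y = cobD r m \<gamma> (\<lambda>k. deg GA (y k)) F y"
  unfolding coboundary_def cobD_def by simp

definition vanish :: "nat \<Rightarrow> ((nat\<Rightarrow>'a)\<Rightarrow>'m) \<Rightarrow> bool" where
  "vanish m F \<longleftrightarrow> (\<forall>y k. k < m \<longrightarrow> y k = 0 \<longrightarrow> F y = 0)"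

lemma cobD_zero: assumes V: "vanish m F" and k: "k \<le> m" "y k = 0"
  shows "cobD r m \<gamma> e F y = 0"
proof -
  have 1: "F (bracket_args br alpha s t y) = 0" if "s < t" "t \<le> m" for s t
  proof -
    define j where "j = (if k < s then k else if k = s \<or> k = t then s else if k < t then k else k - 1)"
    have "j < m" using that k unfolding j_def by auto
    moreover have "bracket_args br alpha s t y j = 0" using that k unfolding j_def bracket_args_def
      by (auto split: if_splits)
    ultimately show ?thesis using V unfolding vanish_def by blast
  qed
  have 2: "act ((alpha^^(r+m-1)) (y s)) (F (omit_arg s y)) = 0" if "s \<le> m" for s
  proof (cases "k = s")
    case True thus ?thesis using k by simp
  next
    case False
    define j where "j = (if k < s then k else k - 1)"
    have "j < m" using that k False unfolding j_def by auto
    moreover have "omit_arg s y j = 0" using that k False unfolding j_def omit_arg_def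
      by (auto split: if_splits)
    ultimately show ?thesis using V unfolding vanish_def by auto
  qed
  show ?thesis unfolding cobD_def using 1 2 by simp
qed

lemma cobD_cong: assumes "\<forall>k\<le>m. e k = e' k" shows "cobD r m \<gamma> e F y = cobD r m \<gamma> e' F y"
proof -
  have a: "(\<Sum>k\<in>{s<..<t}. e k) = (\<Sum>k\<in>{s<..<t}. e' k)" if "t \<le> m" for s t
    using assms that by (intro sum.cong) auto
  have b: "(\<Sum>k<s. e k) = (\<Sum>k<s. e' k)" if "s \<le> m" for s
    using assms that by (intro sum.cong) auto
  show ?thesis unfolding cobD_def using a b assms
    by (intro arg_cong2[where f="(+)"] sum.cong refl) auto
qed

lemma cobD_deg: assumes V: "vanish m F" and H: "\<forall>k\<le>m. y k \<in> GA (e k)"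
  shows "cobD r m \<gamma> (\<lambda>k. deg GA (y k)) F y = cobD r m \<gamma> e F y"
proof (cases "\<exists>k\<le>m. y k = 0")
  case True thus ?thesis using cobD_zero[OF V] by metis
next
  case False
  hence "\<forall>k\<le>m. deg GA (y k) = e k" using H deg_eq by auto
  thus ?thesis by (rule cobD_cong)
qed

lemma vanish_cob: assumes "vanish m F" shows "vanish (Suc m) (\<lambda>y. cobD r m \<gamma> (\<lambda>k. deg GA (y k)) F y)"
  unfolding vanish_def using cobD_zero[OF assms] by (metis less_Suc_eq_le)

end



definition P2 :: "nat \<Rightarrow> (nat \<times> nat) set" where "P2 M = {(s,t). s < t \<and> t \<le> M}"
definition R3 :: "nat \<Rightarrow> (nat \<times> nat \<times> nat) set" where "R3 M = {(a,b,c). a < b \<and> b < c \<and> c \<le> M}"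
definition rho :: "nat \<Rightarrow> nat \<Rightarrow> nat" where "rho w k = (if k < w then k else k - 1)"

lemma fin_P2[simp]: "finite (P2 M)"
  by (rule finite_subset[of _ "{..M} \<times> {..M}"]) (auto simp: P2_def)
lemma fin_P2'[simp]: "finite {p \<in> P2 M. Q p}" by simp
lemma fin_P2''[simp]: "finite {(s,t). (s,t) \<in> P2 M \<and> Q s t}"
  by (rule finite_subset[of _ "P2 M"]) auto
lemma fin_R3[simp]: "finite (R3 M)"
  by (rule finite_subset[of _ "{..M} \<times> {..M} \<times> {..M}"]) (auto simp: R3_def)

lemma sum_P2: "(\<Sum>t\<in>{..M}. \<Sum>s<t. H s t) = (\<Sum>(s,t)\<in>P2 M. H s t)"
proof -
  have "(\<Sum>t\<in>{..M}. \<Sum>s<t. H s t) = (\<Sum>(t,s)\<in>(SIGMA t:{..M}. {..<t}). H s t)"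
    by (rule sum.Sigma) auto
  also have "\<dots> = (\<Sum>(s,t)\<in>P2 M. H s t)"
    by (rule sum.reindex_bij_witness[where i="\<lambda>(a,b). (b,a)" and j="\<lambda>(a,b). (b,a)"])
       (auto simp: P2_def)
  finally show ?thesis .
qed

lemma sum_P2_alt: "(\<Sum>(s,t)\<in>P2 M. H s t) = (\<Sum>s\<in>{..M}. \<Sum>t\<in>{s<..M}. H s t)"
proof -
  have "(\<Sum>s\<in>{..M}. \<Sum>t\<in>{s<..M}. H s t) = (\<Sum>(s,t)\<in>(SIGMA s:{..M}. {s<..M}). H s t)"
    by (rule sum.Sigma) auto
  also have "\<dots> = (\<Sum>(s,t)\<in>P2 M. H s t)"
    by (rule sum.reindex_bij_witness[where i="\<lambda>p. p" and j="\<lambda>p. p"])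
       (auto simp: P2_def)
  finally show ?thesis by simp
qed

lemma sum_rm: assumes "1 \<le> M" "w \<le> M"
  shows "(\<Sum>(u,v)\<in>P2 (M-1). G u v) = (\<Sum>(s,t)\<in>{(s,t)\<in>P2 M. s \<noteq> w \<and> t \<noteq> w}. G (rho w s) (rho w t))"
  by (rule sum.reindex_bij_witness[where j="\<lambda>(u,v). (if u < w then u else Suc u, if v < w then v else Suc v)"
       and i="\<lambda>(s,t). (rho w s, rho w t)"])
     (use assms in \<open>auto simp: P2_def rho_def split: if_splits\<close>)

lemma sum_rm1: assumes "1 \<le> M" "t \<le> M"
  shows "(\<Sum>u\<in>{..M-1}. F u) = (\<Sum>w\<in>{..M}-{t}. F (rho t w))"
  by (rule sum.reindex_bij_witness[where j="\<lambda>u. if u < t then u else Suc u"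
       and i="\<lambda>w. rho t w"])
     (use assms in \<open>auto simp: rho_def split: if_splits\<close>)

lemma sum_Ta: "(\<Sum>(s,t)\<in>P2 M. \<Sum>q\<in>{t<..M}. H s t q) = (\<Sum>(a,b,c)\<in>R3 M. H a b c)"
proof -
  have "(\<Sum>(s,t)\<in>P2 M. \<Sum>q\<in>{t<..M}. H s t q) = (\<Sum>(p,q)\<in>(SIGMA p:P2 M. {snd p<..M}). H (fst p) (snd p) q)"
    by (subst sum.Sigma[symmetric]) (auto simp: case_prod_beta)
  also have "\<dots> = (\<Sum>(a,b,c)\<in>R3 M. H a b c)"
    by (rule sum.reindex_bij_witness[where i="\<lambda>(a,b,c). ((a,b),c)" and j="\<lambda>((a,b),c). (a,b,c)"])
       (auto simp: P2_def R3_def)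
  finally show ?thesis .
qed

lemma sum_Tb: "(\<Sum>(s,t)\<in>P2 M. \<Sum>q\<in>{s<..<t}. H s t q) = (\<Sum>(a,b,c)\<in>R3 M. H a c b)"
proof -
  have "(\<Sum>(s,t)\<in>P2 M. \<Sum>q\<in>{s<..<t}. H s t q) = (\<Sum>(p,q)\<in>(SIGMA p:P2 M. {fst p<..<snd p}). H (fst p) (snd p) q)"
    by (subst sum.Sigma[symmetric]) (auto simp: case_prod_beta)
  also have "\<dots> = (\<Sum>(a,b,c)\<in>R3 M. H a c b)"
    by (rule sum.reindex_bij_witness[where i="\<lambda>(a,b,c). ((a,c),b)" and j="\<lambda>((a,c),b). (a,b,c)"])
       (auto simp: P2_def R3_def)
  finally show ?thesis .
qed

lemma sum_Tc: "(\<Sum>(s,t)\<in>P2 M. \<Sum>p<s. H s t p) = (\<Sum>(a,b,c)\<in>R3 M. H b c a)"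
proof -
  have "(\<Sum>(s,t)\<in>P2 M. \<Sum>p<s. H s t p) = (\<Sum>(p,q)\<in>(SIGMA p:P2 M. {..<fst p}). H (fst p) (snd p) q)"
    by (subst sum.Sigma[symmetric]) (auto simp: case_prod_beta)
  also have "\<dots> = (\<Sum>(a,b,c)\<in>R3 M. H b c a)"
    by (rule sum.reindex_bij_witness[where i="\<lambda>(a,b,c). ((b,c),a)" and j="\<lambda>((b,c),a). (a,b,c)"])
       (auto simp: P2_def R3_def)
  finally show ?thesis .
qed


lemma sum_swapw: "(\<Sum>w\<in>{..M}. \<Sum>(s,t)\<in>{(s,t)\<in>P2 M. s \<noteq> w \<and> t \<noteq> w}. G w s t)
   = (\<Sum>(s,t)\<in>P2 M. \<Sum>w\<in>{..M}-{s,t}. G w s t)"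
proof -
  have 1: "(\<Sum>w\<in>{..M}. \<Sum>(s,t)\<in>{(s,t)\<in>P2 M. s \<noteq> w \<and> t \<noteq> w}. G w s t)
     = (\<Sum>(w,p)\<in>(SIGMA w:{..M}. {(s,t)\<in>P2 M. s \<noteq> w \<and> t \<noteq> w}). G w (fst p) (snd p))"
    by (subst sum.Sigma[symmetric]) (auto simp: case_prod_beta)
  have 2: "(\<Sum>(s,t)\<in>P2 M. \<Sum>w\<in>{..M}-{s,t}. G w s t)
     = (\<Sum>(p,w)\<in>(SIGMA p:P2 M. {..M}-{fst p, snd p}). G w (fst p) (snd p))"
    by (subst sum.Sigma[symmetric]) (auto simp: case_prod_beta)
  have 3: "(\<Sum>(w,p)\<in>(SIGMA w:{..M}. {(s,t)\<in>P2 M. s \<noteq> w \<and> t \<noteq> w}). G w (fst p) (snd p))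
     = (\<Sum>(p,w)\<in>(SIGMA p:P2 M. {..M}-{fst p, snd p}). G w (fst p) (snd p))"
    by (rule sum.reindex_bij_witness[where i="\<lambda>(a,b). (b,a)" and j="\<lambda>(a,b). (b,a)"])
       (auto simp: P2_def)
  show ?thesis using 1 2 3 by simp
qed

lemma sum_swap_pairs: fixes G :: "nat \<Rightarrow> nat \<Rightarrow> nat \<Rightarrow> nat \<Rightarrow> 'b::ab_group_add"
  assumes "\<And>s t p q. (s,t) \<in> P2 M \<Longrightarrow> (p,q) \<in> P2 M \<Longrightarrow> p \<noteq> s \<Longrightarrow> p \<noteq> t \<Longrightarrow> q \<noteq> s \<Longrightarrow> q \<noteq> t
     \<Longrightarrow> G s t p q = - G p q s t"
  shows "(\<Sum>(s,t)\<in>P2 M. \<Sum>(p,q)\<in>{(p,q)\<in>P2 M. p \<noteq> s \<and> p \<noteq> t \<and> q \<noteq> s \<and> q \<noteq> t}. G s t p q)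
    = - (\<Sum>(s,t)\<in>P2 M. \<Sum>(p,q)\<in>{(p,q)\<in>P2 M. p \<noteq> s \<and> p \<noteq> t \<and> q \<noteq> s \<and> q \<noteq> t}. G s t p q)"
proof -
  let ?X = "(SIGMA st:P2 M. {(p,q)\<in>P2 M. p \<noteq> fst st \<and> p \<noteq> snd st \<and> q \<noteq> fst st \<and> q \<noteq> snd st})"
  have e: "(\<Sum>(s,t)\<in>P2 M. \<Sum>(p,q)\<in>{(p,q)\<in>P2 M. p \<noteq> s \<and> p \<noteq> t \<and> q \<noteq> s \<and> q \<noteq> t}. G s t p q)
     = (\<Sum>(st,pq)\<in>?X. G (fst st) (snd st) (fst pq) (snd pq))"
    by (subst sum.Sigma[symmetric]) (auto simp: case_prod_beta)
  have "(\<Sum>(st,pq)\<in>?X. G (fst st) (snd st) (fst pq) (snd pq))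
     = (\<Sum>(st,pq)\<in>?X. - G (fst st) (snd st) (fst pq) (snd pq))"
    by (rule sum.reindex_bij_witness[where i="\<lambda>(a,b). (b,a)" and j="\<lambda>(a,b). (b,a)"])
       (auto simp: P2_def intro!: assms[THEN sym])
  hence "(\<Sum>(st,pq)\<in>?X. G (fst st) (snd st) (fst pq) (snd pq)) = - (\<Sum>(st,pq)\<in>?X. G (fst st) (snd st) (fst pq) (snd pq))"
    by (simp add: sum_negf case_prod_beta)
  thus ?thesis using e by simp
qed

lemma split_X: fixes G :: "nat \<Rightarrow> nat \<Rightarrow> 'b::comm_monoid_add"
  assumes st: "s < t" "t \<le> M"
  shows "(\<Sum>(p,q)\<in>{(p,q)\<in>P2 M. p \<noteq> t \<and> q \<noteq> t}. G p q)
   = (\<Sum>(p,q)\<in>{(p,q)\<in>P2 M. p \<noteq> s \<and> p \<noteq> t \<and> q \<noteq> s \<and> q \<noteq> t}. G p q)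
     + ((\<Sum>q\<in>{s<..<t}. G s q) + (\<Sum>q\<in>{t<..M}. G s q) + (\<Sum>p<s. G p s))"
proof -
  let ?X1 = "{(p,q)\<in>P2 M. p \<noteq> s \<and> p \<noteq> t \<and> q \<noteq> s \<and> q \<noteq> t}"
  let ?A = "(\<lambda>q. (s,q)) ` {s<..<t}" and ?B = "(\<lambda>q. (s,q)) ` {t<..M}" and ?C = "(\<lambda>p. (p,s)) ` {..<s}"
  have X: "{(p,q)\<in>P2 M. p \<noteq> t \<and> q \<noteq> t} = ?X1 \<union> (?A \<union> ?B \<union> ?C)"
    using st by (auto simp: P2_def image_iff)
  have f1: "finite ?X1" by simp
  have fA: "finite (?A \<union> ?B \<union> ?C)"
    by (intro finite_UnI finite_imageI finite_greaterThanLessThan finite_greaterThanAtMost finite_lessThan)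
  have d1: "?X1 \<inter> (?A \<union> ?B \<union> ?C) = {}" by auto
  have "(\<Sum>(p,q)\<in>{(p,q)\<in>P2 M. p \<noteq> t \<and> q \<noteq> t}. G p q)
     = (\<Sum>(p,q)\<in>?X1. G p q) + (\<Sum>(p,q)\<in>?A \<union> ?B \<union> ?C. G p q)"
    unfolding X by (rule sum.union_disjoint[OF f1 fA d1])
  also have "(\<Sum>(p,q)\<in>?A \<union> ?B \<union> ?C. G p q) = (\<Sum>(p,q)\<in>?A \<union> ?B. G p q) + (\<Sum>(p,q)\<in>?C. G p q)"
    by (rule sum.union_disjoint)
       (intro finite_UnI finite_imageI finite_greaterThanLessThan finite_greaterThanAtMost finite_lessThan, 
        intro finite_UnI finite_imageI finite_greaterThanLessThan finite_greaterThanAtMost finite_lessThan, auto)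
  also have "(\<Sum>(p,q)\<in>?A \<union> ?B. G p q) = (\<Sum>(p,q)\<in>?A. G p q) + (\<Sum>(p,q)\<in>?B. G p q)"
    by (rule sum.union_disjoint) (intro finite_imageI finite_greaterThanLessThan finite_greaterThanAtMost finite_lessThan, 
        intro finite_imageI finite_greaterThanLessThan finite_greaterThanAtMost finite_lessThan, auto)
  also have "(\<Sum>(p,q)\<in>?A. G p q) = (\<Sum>q\<in>{s<..<t}. G s q)"
    by (subst sum.reindex) (auto simp: inj_on_def)
  also have "(\<Sum>(p,q)\<in>?B. G p q) = (\<Sum>q\<in>{t<..M}. G s q)"
    by (subst sum.reindex) (auto simp: inj_on_def)
  also have "(\<Sum>(p,q)\<in>?C. G p q) = (\<Sum>p<s. G p s)"
    by (subst sum.reindex) (auto simp: inj_on_def)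
  finally show ?thesis .
qed

lemma split_om: fixes G :: "nat \<Rightarrow> 'b::comm_monoid_add"
  assumes "s \<le> M"
  shows "(\<Sum>w\<in>{..M}-{s}. G w) = (\<Sum>w<s. G w) + (\<Sum>w\<in>{s<..M}. G w)"
proof -
  have "{..M}-{s} = {..<s} \<union> {s<..M}" using assms by auto
  moreover have "sum G ({..<s} \<union> {s<..M}) = sum G {..<s} + sum G {s<..M}"
    by (rule sum.union_disjoint) auto
  ultimately show ?thesis by simp
qed

lemma split_rm: fixes G :: "nat \<Rightarrow> 'b::comm_monoid_add"
  assumes "s < t" "t \<le> M"
  shows "(\<Sum>w\<in>{..M}-{t}. G w) = G s + (\<Sum>w\<in>{..M}-{s,t}. G w)"
proof -
  have e: "{..M}-{t} = insert s ({..M}-{s,t})" using assms by auto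
  show ?thesis unfolding e by (rule sum.insert) auto
qed




locale Core = CHL sA GA br eps alpha sM GM act beta
  for sA :: "'k::field_char_0 \<Rightarrow> 'a::ab_group_add \<Rightarrow> 'a"
    and GA :: "'g::ab_group_add \<Rightarrow> 'a set"
    and br :: "'a \<Rightarrow> 'a \<Rightarrow> 'a"
    and eps :: "'g \<Rightarrow> 'g \<Rightarrow> 'k"
    and alpha :: "'a \<Rightarrow> 'a"
    and sM :: "'k \<Rightarrow> 'm::ab_group_add \<Rightarrow> 'm"
    and GM :: "'g \<Rightarrow> 'm set"
    and act :: "'a \<Rightarrow> 'm \<Rightarrow> 'm"
    and beta :: "'m \<Rightarrow> 'm" +
  fixes N r :: nat and \<gamma> :: 'g and f :: "(nat \<Rightarrow> 'a) \<Rightarrow> 'm" and x :: "nat \<Rightarrow> 'a" and d :: "nat \<Rightarrow> 'g"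
  assumes N2: "2 \<le> N" and r1: "1 \<le> r"
    and flin: "\<forall>i<N-1. \<forall>y. Vector_Spaces.linear sA sM (\<lambda>v. f (y(i := v)))"
    and fcomp: "\<forall>y. f (alpha \<circ> y) = beta (f y)"
    and xdeg: "\<forall>k\<le>N. x k \<in> GA (d k)"
begin

abbreviation bra where "bra \<equiv> bracket_args br alpha"
abbreviation om where "om \<equiv> omit_arg"

definition P where "P = alpha ^^ (r + N - 2)"
definition Q where "Q = alpha ^^ (r + N - 1)"
definition S where "S k = (\<Sum>j<k. d j)"
definition dbr where "dbr s t = (\<lambda>k. if k < s then d k else if k = s then d s + d t else if k < t then d k else d (Suc k))"
definition ic2 where "ic2 e s t = (-1)^t * eps (\<Sum>k\<in>{s<..<t}. e k) (e t)"
definition ic1 where "ic1 e s = (-1)^s * eps (\<gamma> + (\<Sum>k<s. e k)) (e s)"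

lemma cobD_alt: "cobD r m \<gamma> e F y = (\<Sum>(s,t)\<in>P2 m. sM (ic2 e s t) (F (bra s t y)))
   + (\<Sum>s\<in>{..m}. sM (ic1 e s) (act ((alpha^^(r+m-1)) (y s)) (F (om s y))))"
  unfolding cobD_def ic2_def ic1_def sum_P2 by simp

definition BBsum where "BBsum = (\<Sum>(s,t)\<in>P2 N. \<Sum>(u,v)\<in>P2 (N-1).
   sM (ic2 d s t * ic2 (dbr s t) u v) (f (bra u v (bra s t x))))"
definition BAsum where "BAsum = (\<Sum>(s,t)\<in>P2 N. \<Sum>u\<in>{..N-1}.
   sM (ic2 d s t * ic1 (dbr s t) u) (act (P (bra s t x u)) (f (om u (bra s t x)))))"
definition ABsum where "ABsum = (\<Sum>s\<in>{..N}. \<Sum>(u,v)\<in>P2 (N-1).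
   sM (ic1 d s * ic2 (om s d) u v) (act (Q (x s)) (f (bra u v (om s x)))))"
definition AAsum where "AAsum = (\<Sum>s\<in>{..N}. \<Sum>u\<in>{..N-1}.
   sM (ic1 d s * ic1 (om s d) u) (act (Q (x s)) (act (P (om s x u)) (f (om u (om s x))))))"

lemma expand:
  "(\<Sum>(s,t)\<in>P2 N. sM (ic2 d s t) (cobD r (N-1) \<gamma> (dbr s t) f (bra s t x)))
   + (\<Sum>s\<in>{..N}. sM (ic1 d s) (act (Q (x s)) (cobD r (N-1) \<gamma> (om s d) f (om s x))))
   = BBsum + BAsum + ABsum + AAsum"
proof -
  have e: "r + (N - 1) - 1 = r + N - 2" using N2 by simp
  have 1: "(\<Sum>(s,t)\<in>P2 N. sM (ic2 d s t) (cobD r (N-1) \<gamma> (dbr s t) f (bra s t x))) = BBsum + BAsum"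
    unfolding BBsum_def BAsum_def cobD_alt e P_def[symmetric]
    by (simp add: M.scale_right_distrib M.scale_sum_right case_prod_beta sum.distrib)
  have 2: "(\<Sum>s\<in>{..N}. sM (ic1 d s) (act (Q (x s)) (cobD r (N-1) \<gamma> (om s d) f (om s x)))) = ABsum + AAsum"
    unfolding ABsum_def AAsum_def cobD_alt e P_def[symmetric]
    by (simp add: M.scale_right_distrib M.scale_sum_right case_prod_beta sum.distrib act_r act_sum)
  show ?thesis using 1 2 by (simp add: add.assoc)
qed

definition pre :: "(nat \<Rightarrow> 'g) \<Rightarrow> nat \<Rightarrow> 'g" where "pre e k = (\<Sum>j<k. e j)"
lemma pre_d: "pre d k = S k" unfolding pre_def S_def ..

lemma S_Suc[simp]: "S (Suc k) = S k + d k" unfolding S_def by simp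
lemma S_0[simp]: "S 0 = 0" unfolding S_def by simp

lemma om_val: "om w e k = (if k < w then e k else e (Suc k))" unfolding omit_arg_def by simp
lemma dbr_val: "dbr s t k = (if k < s then d k else if k = s then d s + d t else if k < t then d k else d (Suc k))"
  unfolding dbr_def by simp

lemma om_lt: "k < w \<Longrightarrow> om w e k = e k" and om_ge: "w \<le> k \<Longrightarrow> om w e k = e (Suc k)"
  unfolding omit_arg_def by auto
lemma dbr_lt: "k < s \<Longrightarrow> dbr s t k = d k" and dbr_s: "dbr s t s = d s + d t"
  and dbr_mid: "s < k \<Longrightarrow> k < t \<Longrightarrow> dbr s t k = d k" and dbr_ge: "s < t \<Longrightarrow> t \<le> k \<Longrightarrow> dbr s t k = d (Suc k)"
  unfolding dbr_def by auto
lemmas dvals = om_lt om_ge dbr_lt dbr_s dbr_mid dbr_ge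

lemma pre_dbr: assumes "s < t"
  shows "pre (dbr s t) u = (if u \<le> s then S u else if u \<le> t then S u + d t else S (Suc u))"
proof (induct u)
  case 0 thus ?case by (simp add: pre_def)
next
  case (Suc u)
  show ?case using assms Suc by (cases "u = t"; cases "u = s") (auto simp: pre_def dbr_def algebra_simps)
qed

lemma pre_om: "pre (om w d) u = (if u \<le> w then S u else S (Suc u) - d w)"
proof (induct u)
  case 0 thus ?case by (simp add: pre_def)
next
  case (Suc u)
  show ?case using Suc by (cases "u = w") (auto simp: pre_def omit_arg_def algebra_simps)
qed

lemma int_sum: fixes e :: "nat \<Rightarrow> 'g" assumes "u < v"
  shows "(\<Sum>k\<in>{u<..<v}. e k) = (\<Sum>k<v. e k) - (\<Sum>k<Suc u. e k)"
proof -
  have "{..<v} = {..<Suc u} \<union> {u<..<v}" using assms by auto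
  hence "(\<Sum>k<v. e k) = (\<Sum>k\<in>{..<Suc u} \<union> {u<..<v}. e k)" by simp
  also have "\<dots> = (\<Sum>k<Suc u. e k) + (\<Sum>k\<in>{u<..<v}. e k)"
    by (rule sum.union_disjoint) auto
  finally have "(\<Sum>k<v. e k) = (\<Sum>k<Suc u. e k) + (\<Sum>k\<in>{u<..<v}. e k)" .
  thus ?thesis by simp
qed

lemma ic2_eq: "u < v \<Longrightarrow> ic2 e u v = (-1)^v * eps (pre e v - pre e (Suc u)) (e v)"
  unfolding ic2_def pre_def using int_sum by simp
lemma ic1_eq: "ic1 e u = (-1)^u * eps (\<gamma> + pre e u) (e u)"
  unfolding ic1_def pre_def ..

lemma coefE1: assumes "a < b" "b \<le> N"
  shows "ic1 d a * ic1 (om a d) (b-1) = - (ic2 d a b * ic1 (dbr a b) a)"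
    and "ic1 d b * ic1 (om b d) a = ic2 d a b * ic1 (dbr a b) a * eps (d a) (d b)"
proof -
  obtain b' where b: "b = Suc b'" using assms by (cases b) auto
  show "ic1 d a * ic1 (om a d) (b-1) = - (ic2 d a b * ic1 (dbr a b) a)"
    using assms unfolding b
    by (cases "b' = a") (auto simp: ic1_eq ic2_eq pre_d pre_om pre_dbr eps_add_l eps_add_r eps_diff_l
                   dvals eps_sw field_simps)
  show "ic1 d b * ic1 (om b d) a = ic2 d a b * ic1 (dbr a b) a * eps (d a) (d b)"
    using assms unfolding b
    by (auto simp: ic1_eq ic2_eq pre_d pre_om pre_dbr eps_add_l eps_add_r eps_diff_l
                   dvals eps_sw field_simps)
qed

definition AAt where "AAt s u = sM (ic1 d s * ic1 (om s d) u) (act (Q (x s)) (act (P (om s x u)) (f (om u (om s x)))))"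
definition BAt where "BAt s t u = sM (ic2 d s t * ic1 (dbr s t) u) (act (P (bra s t x u)) (f (om u (bra s t x))))"
definition ABt where "ABt w u v = sM (ic1 d w * ic2 (om w d) u v) (act (Q (x w)) (f (bra u v (om w x))))"
definition BBt where "BBt s t u v = sM (ic2 d s t * ic2 (dbr s t) u v) (f (bra u v (bra s t x)))"

lemma Q_P: "Q y = alpha (P y)"
proof -
  have "r + N - 1 = Suc (r + N - 2)" using N2 r1 by simp
  thus ?thesis unfolding Q_def P_def by simp
qed

lemma P_br: "P (br y z) = br (P y) (P z)" unfolding P_def by (rule mult_pow)
lemma P_deg: "y \<in> GA g \<Longrightarrow> P y \<in> GA g" unfolding P_def by (rule alpha_pow_deg)

lemma E1: assumes ab: "a < b" "b \<le> N"
  shows "AAt b a + AAt a (b-1) + BAt a b a = 0"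
proof -
  define Z where "Z = om a (om b x)"
  have h1: "om b x a = x a" using ab by (simp add: om_lt)
  have h2: "om a x (b-1) = x b" using ab by (simp add: om_ge)
  have h3: "om (b-1) (om a x) = Z" unfolding Z_def omit_arg_def using ab by (auto intro!: ext)
  have h4: "bra a b x a = br (x a) (x b)" unfolding bracket_args_def by simp
  have h5: "om a (bra a b x) = alpha \<circ> Z" unfolding Z_def omit_arg_def bracket_args_def using ab
    by (auto intro!: ext)
  have xa: "P (x a) \<in> GA (d a)" and xb: "P (x b) \<in> GA (d b)" using xdeg ab by (auto intro!: P_deg)
  define u1 where "u1 = act (alpha (P (x b))) (act (P (x a)) (f Z))"
  define u2 where "u2 = act (alpha (P (x a))) (act (P (x b)) (f Z))"
  have A1: "AAt b a = sM (ic1 d b * ic1 (om b d) a) u1" unfolding AAt_def u1_def h1 Z_def Q_P ..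
  have A2: "AAt a (b-1) = sM (ic1 d a * ic1 (om a d) (b-1)) u2" unfolding AAt_def u2_def h2 h3 Q_P ..
  have A3: "BAt a b a = sM (ic2 d a b * ic1 (dbr a b) a) (u2 - sM (eps (d a) (d b)) u1)"
    unfolding BAt_def h4 h5 P_br u1_def u2_def using modid[OF xa xb] fcomp by simp
  show ?thesis unfolding A1 A2 A3 coefE1[OF ab]
    by (simp add: M.scale_right_diff_distrib M.scale_left_distrib)
qed

lemma coefE2: assumes st: "s < t" "t \<le> N" "w \<le> N" "w \<noteq> s" "w \<noteq> t"
  shows "ic2 d s t * ic1 (dbr s t) (rho t w) = - (ic1 d w * ic2 (om w d) (rho w s) (rho w t))"
proof -
  consider "w < s" | "s < w" "w < t" | "t < w" using st by linarith
  thus ?thesis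
  proof cases
    case 1
    obtain s' where s: "s = Suc s'" using 1 by (cases s) auto
    obtain t' where t: "t = Suc t'" using st by (cases t) auto
    show ?thesis using st 1 unfolding s t
      by (cases "s' = w") (auto simp: rho_def ic1_eq ic2_eq pre_d pre_om pre_dbr eps_add_l eps_add_r eps_diff_l
                   dvals eps_sw field_simps)
  next
    case 2
    obtain t' where t: "t = Suc t'" using st by (cases t) auto
    show ?thesis using st 2 unfolding t
      by (cases "t' = w") (auto simp: rho_def ic1_eq ic2_eq pre_d pre_om pre_dbr eps_add_l eps_add_r eps_diff_l
                   dvals eps_sw field_simps)
  next
    case 3
    obtain w' where w: "w = Suc w'" using 3 by (cases w) auto
    show ?thesis using st 3 unfolding w
      by (cases "w' = t") (auto simp: rho_def ic1_eq ic2_eq pre_d pre_om pre_dbr eps_add_l eps_add_r eps_diff_l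
                   dvals eps_sw field_simps)
  qed
qed

lemma P_alpha: "P (alpha y) = Q y"
  unfolding Q_P P_def by (simp add: funpow_swap1)

lemma E2: assumes st: "s < t" "t \<le> N" "w \<le> N" "w \<noteq> s" "w \<noteq> t"
  shows "BAt s t (rho t w) + ABt w (rho w s) (rho w t) = 0"
proof -
  have v1: "bra s t x (rho t w) = alpha (x w)"
    using st unfolding bracket_args_def rho_def by auto
  have v2: "om (rho t w) (bra s t x) = bra (rho w s) (rho w t) (om w x)"
    using st unfolding bracket_args_def rho_def omit_arg_def by (auto intro!: ext)
  show ?thesis unfolding BAt_def ABt_def v1 v2 P_alpha coefE2[OF st]
    by (simp add: M.scale_left_distrib[symmetric])
qed

lemma pre_om_le: "u \<le> w \<Longrightarrow> pre (om w d) u = S u"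
  and pre_om_ge: "w \<le> u \<Longrightarrow> pre (om w d) u = S (Suc u) - d w"
  using pre_om[of w u] by (auto simp: le_Suc_eq)
lemma pre_dbr_a: "s < t \<Longrightarrow> u \<le> s \<Longrightarrow> pre (dbr s t) u = S u"
  and pre_dbr_b: "s < t \<Longrightarrow> s < u \<Longrightarrow> u \<le> t \<Longrightarrow> pre (dbr s t) u = S u + d t"
  and pre_dbr_c: "s < t \<Longrightarrow> t \<le> u \<Longrightarrow> pre (dbr s t) u = S (Suc u)"
  using pre_dbr[of s t u] by (auto simp: add.commute)
lemma m1_pred: "0 < q \<Longrightarrow> (-1::'k)^(q - Suc 0) = - ((-1)^q)"
  by (cases q) auto
lemma eps_sw2: "eps a b * (eps b a * c) = c"
  by (simp add: mult.assoc[symmetric] eps_sw)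
lemmas cf = ic1_eq ic2_eq pre_d pre_om_le pre_om_ge pre_dbr_a pre_dbr_b pre_dbr_c m1_pred
   eps_add_l eps_add_r eps_diff_l dvals eps_sw eps_sw2 rho_def

lemma coefE3: assumes "s < t" "t \<le> N" "p < q" "q \<le> N" "p \<noteq> s" "p \<noteq> t" "q \<noteq> s" "q \<noteq> t"
  shows "ic2 d s t * ic2 (dbr s t) (rho t p) (rho t q) = - (ic2 d p q * ic2 (dbr p q) (rho q s) (rho q t))"
proof -
  consider "t < p" | "s < p" "p < t" "t < q" | "s < p" "q < t" | "p < s" "t < q"
    | "p < s" "s < q" "q < t" | "q < s" using assms by linarith
  thus ?thesis
    by cases (use assms in \<open>auto simp: cf field_simps\<close>)
qed

lemma valE3: assumes "s < t" "t \<le> N" "p < q" "q \<le> N" "p \<noteq> s" "p \<noteq> t" "q \<noteq> s" "q \<noteq> t"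
  shows "bra (rho t p) (rho t q) (bra s t x) = bra (rho q s) (rho q t) (bra p q x)"
proof (rule ext)
  fix k
  consider "t < p" | "s < p" "p < t" "t < q" | "s < p" "q < t" | "p < s" "t < q"
    | "p < s" "s < q" "q < t" | "q < s" using assms by linarith
  thus "bra (rho t p) (rho t q) (bra s t x) k = bra (rho q s) (rho q t) (bra p q x) k"
    by cases (use assms in \<open>auto simp: bracket_args_def rho_def mult\<close>)
qed

lemma E3: assumes "s < t" "t \<le> N" "p < q" "q \<le> N" "p \<noteq> s" "p \<noteq> t" "q \<noteq> s" "q \<noteq> t"
  shows "BBt s t (rho t p) (rho t q) = - BBt p q (rho q s) (rho q t)"
  unfolding BBt_def valE3[OF assms] coefE3[OF assms] by simp

lemma coefE4: assumes "a < b" "b < c" "c \<le> N"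
  shows "ic2 d a c * ic2 (dbr a c) (rho c a) (rho c b) * (eps (d a + d c) (d b) * eps (d a) (d c))
      = (ic2 d b c * ic2 (dbr b c) (rho c a) (rho c b) * eps (d a) (d c)) * eps (d a) (d b)"
    and "- (ic2 d a b * ic2 (dbr a b) (rho b a) (rho b c) * eps (d a + d b) (d c))
      = (ic2 d b c * ic2 (dbr b c) (rho c a) (rho c b) * eps (d a) (d c)) * eps (d b) (d c)"
  using assms by (auto simp: cf field_simps)

lemma E4: assumes abc: "a < b" "b < c" "c \<le> N"
  shows "BBt a b (rho b a) (rho b c) + BBt a c (rho c a) (rho c b) + BBt b c (rho c a) (rho c b) = 0"
proof -
  interpret A: vector_space sA by (rule vsA)
  define Z where "Z = (\<lambda>k. if k < a then alpha (alpha (x k)) else if k = a then 0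
     else if k < b then alpha (alpha (x k)) else if Suc k < c then alpha (alpha (x (Suc k)))
     else alpha (alpha (x (Suc (Suc k)))))"
  have r1: "rho b a = a" "rho b c = c - 1" "rho c a = a" "rho c b = b" using abc by (auto simp: rho_def)
  have V1: "bra a (c-1) (bra a b x) = Z(a := br (br (x a) (x b)) (alpha (x c)))"
    using abc unfolding Z_def bracket_args_def by (auto intro!: ext)
  have V2: "bra a b (bra a c x) = Z(a := br (br (x a) (x c)) (alpha (x b)))"
    using abc unfolding Z_def bracket_args_def by (auto intro!: ext)
  have V3: "bra a b (bra b c x) = Z(a := br (alpha (x a)) (br (x b) (x c)))"
    using abc unfolding Z_def bracket_args_def by (auto intro!: ext)
  have "a < N - 1" using abc by linarith
  hence Lf: "Vector_Spaces.linear sA sM (\<lambda>v. f (Z(a := v)))" using flin by blast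
  define F where "F = (\<lambda>v. f (Z(a := v)))"
  have Fapp: "f (Z(a := v)) = F v" for v unfolding F_def ..
  have Fadd: "F (u + v) = F u + F v" and Fsc: "F (sA c u) = sM c (F u)" for u v c
    using Lf unfolding linear_iff F_def by auto
  have F0: "F 0 = 0" using Fsc[of 0 0] by simp
  have Fneg: "F (- u) = - F u" for u
  proof -
    have "F (- u) + F u = 0" using Fadd[of "- u" u] F0 by simp
    thus ?thesis by (simp add: eq_neg_iff_add_eq_0)
  qed
  have xa: "x a \<in> GA (d a)" and xb: "x b \<in> GA (d b)" and xc: "x c \<in> GA (d c)" using xdeg abc by auto
  have brneg: "br u (- v) = - br u v" for u v
  proof -
    have "br u (- v) + br u v = 0" using br_lin_r(1)[of u "- v" v] by simp
    thus ?thesis by (simp add: eq_neg_iff_add_eq_0)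
  qed
  define Xa where "Xa = br (alpha (x a)) (br (x b) (x c))"
  define Xb where "Xb = br (alpha (x b)) (br (x c) (x a))"
  define Xc where "Xc = br (alpha (x c)) (br (x a) (x b))"
  have s1: "br (br (x a) (x b)) (alpha (x c)) = - sA (eps (d a + d b) (d c)) Xc"
    unfolding Xc_def by (rule br_skew[OF br_deg[OF xa xb] alpha_deg[OF xc]])
  have s2: "br (br (x a) (x c)) (alpha (x b)) = sA (eps (d a + d c) (d b) * eps (d a) (d c)) Xb"
  proof -
    have "br (br (x a) (x c)) (alpha (x b)) = - sA (eps (d a + d c) (d b)) (br (alpha (x b)) (br (x a) (x c)))"
      by (rule br_skew[OF br_deg[OF xa xc] alpha_deg[OF xb]])
    also have "br (alpha (x b)) (br (x a) (x c)) = - sA (eps (d a) (d c)) Xb"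
      unfolding Xb_def br_skew[OF xa xc] brneg br_lin_r(2) ..
    finally show ?thesis by simp
  qed
  have T1: "BBt a b (rho b a) (rho b c) = sM (- (ic2 d a b * ic2 (dbr a b) (rho b a) (rho b c) * eps (d a + d b) (d c))) (F Xc)"
    unfolding BBt_def r1 V1 s1 Fapp Fneg Fsc by simp
  have T2: "BBt a c (rho c a) (rho c b) = sM (ic2 d a c * ic2 (dbr a c) (rho c a) (rho c b) * (eps (d a + d c) (d b) * eps (d a) (d c))) (F Xb)"
    unfolding BBt_def r1 V2 s2 Fapp Fneg Fsc by simp
  have T3: "BBt b c (rho c a) (rho c b) = sM (ic2 d b c * ic2 (dbr b c) (rho c a) (rho c b)) (F Xa)"
    unfolding BBt_def r1 V3 Xa_def F_def ..
  define lam where "lam = ic2 d b c * ic2 (dbr b c) (rho c a) (rho c b) * eps (d a) (d c)"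
  have k3: "ic2 d b c * ic2 (dbr b c) (rho c a) (rho c b) = lam * eps (d c) (d a)"
    unfolding lam_def by (simp add: mult.assoc eps_sw)
  have J: "sA (eps (d c) (d a)) Xa + sA (eps (d a) (d b)) Xb + sA (eps (d b) (d c)) Xc = 0"
    unfolding Xa_def Xb_def Xc_def by (rule jacobi[OF xa xb xc])
  have "F (sA (eps (d c) (d a)) Xa + sA (eps (d a) (d b)) Xb + sA (eps (d b) (d c)) Xc) = 0"
    unfolding J F0 ..
  hence J2: "sM (eps (d c) (d a)) (F Xa) + sM (eps (d a) (d b)) (F Xb) + sM (eps (d b) (d c)) (F Xc) = 0"
    by (simp add: Fadd Fsc)
  show ?thesis unfolding T1 T2 T3 coefE4[OF abc, folded lam_def] k3
    using arg_cong[OF J2, of "sM lam"]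
    by (simp add: M.scale_right_distrib algebra_simps)
qed

lemma AA_eq: "AAsum = (\<Sum>(a,b)\<in>P2 N. AAt b a + AAt a (b-1))"
proof -
  have N1: "1 \<le> N" using N2 by simp
  have "AAsum = (\<Sum>s\<in>{..N}. \<Sum>u\<in>{..N-1}. AAt s u)" unfolding AAsum_def AAt_def ..
  also have "\<dots> = (\<Sum>s\<in>{..N}. \<Sum>w\<in>{..N}-{s}. AAt s (rho s w))"
    using N1 by (intro sum.cong refl sum_rm1) auto
  also have "\<dots> = (\<Sum>s\<in>{..N}. (\<Sum>w<s. AAt s w) + (\<Sum>w\<in>{s<..N}. AAt s (w-1)))"
  proof (intro sum.cong refl)
    fix s assume "s \<in> {..N}"
    hence "(\<Sum>w\<in>{..N}-{s}. AAt s (rho s w)) = (\<Sum>w<s. AAt s (rho s w)) + (\<Sum>w\<in>{s<..N}. AAt s (rho s w))"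
      by (intro split_om) auto
    also have "(\<Sum>w<s. AAt s (rho s w)) = (\<Sum>w<s. AAt s w)" by (intro sum.cong) (auto simp: rho_def)
    also have "(\<Sum>w\<in>{s<..N}. AAt s (rho s w)) = (\<Sum>w\<in>{s<..N}. AAt s (w-1))" by (intro sum.cong) (auto simp: rho_def)
    finally show "(\<Sum>w\<in>{..N}-{s}. AAt s (rho s w)) = (\<Sum>w<s. AAt s w) + (\<Sum>w\<in>{s<..N}. AAt s (w-1))" .
  qed
  also have "\<dots> = (\<Sum>s\<in>{..N}. \<Sum>w<s. AAt s w) + (\<Sum>s\<in>{..N}. \<Sum>w\<in>{s<..N}. AAt s (w-1))"
    by (rule sum.distrib)
  also have "\<dots> = (\<Sum>(a,b)\<in>P2 N. AAt b a) + (\<Sum>(a,b)\<in>P2 N. AAt a (b-1))"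
    unfolding sum_P2 sum_P2_alt ..
  also have "\<dots> = (\<Sum>(a,b)\<in>P2 N. AAt b a + AAt a (b-1))"
    by (simp add: sum.distrib[symmetric] case_prod_beta)
  finally show ?thesis .
qed

lemma BA_eq: "BAsum = (\<Sum>(s,t)\<in>P2 N. BAt s t s) + (\<Sum>(s,t)\<in>P2 N. \<Sum>w\<in>{..N}-{s,t}. BAt s t (rho t w))"
proof -
  have N1: "1 \<le> N" using N2 by simp
  have "BAsum = (\<Sum>(s,t)\<in>P2 N. \<Sum>u\<in>{..N-1}. BAt s t u)" unfolding BAsum_def BAt_def ..
  also have "\<dots> = (\<Sum>(s,t)\<in>P2 N. BAt s t s + (\<Sum>w\<in>{..N}-{s,t}. BAt s t (rho t w)))"
  proof (intro sum.cong refl, clarify)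
    fix s t assume "(s,t) \<in> P2 N"
    hence st: "s < t" "t \<le> N" by (auto simp: P2_def)
    have "(\<Sum>u\<in>{..N-1}. BAt s t u) = (\<Sum>w\<in>{..N}-{t}. BAt s t (rho t w))"
      using N1 st by (intro sum_rm1) auto
    also have "\<dots> = BAt s t (rho t s) + (\<Sum>w\<in>{..N}-{s,t}. BAt s t (rho t w))"
      using st by (rule split_rm)
    finally show "(\<Sum>u\<in>{..N-1}. BAt s t u) = BAt s t s + (\<Sum>w\<in>{..N}-{s,t}. BAt s t (rho t w))"
      using st by (simp add: rho_def)
  qed
  also have "\<dots> = (\<Sum>(s,t)\<in>P2 N. BAt s t s) + (\<Sum>(s,t)\<in>P2 N. \<Sum>w\<in>{..N}-{s,t}. BAt s t (rho t w))"
    by (simp add: sum.distrib case_prod_beta)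
  finally show ?thesis .
qed

lemma AB_eq: "ABsum = (\<Sum>(s,t)\<in>P2 N. \<Sum>w\<in>{..N}-{s,t}. ABt w (rho w s) (rho w t))"
proof -
  have N1: "1 \<le> N" using N2 by simp
  have "ABsum = (\<Sum>w\<in>{..N}. \<Sum>(u,v)\<in>P2 (N-1). ABt w u v)" unfolding ABsum_def ABt_def ..
  also have "\<dots> = (\<Sum>w\<in>{..N}. \<Sum>(s,t)\<in>{(s,t)\<in>P2 N. s \<noteq> w \<and> t \<noteq> w}. ABt w (rho w s) (rho w t))"
    using N1 by (intro sum.cong refl sum_rm) auto
  also have "\<dots> = (\<Sum>(s,t)\<in>P2 N. \<Sum>w\<in>{..N}-{s,t}. ABt w (rho w s) (rho w t))"
    by (rule sum_swapw)
  finally show ?thesis .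
qed

lemma char0_half: fixes X :: 'm assumes "X = - X" shows "X = 0"
proof -
  have "sM 2 X = sM (1 + 1) X" by simp
  also have "\<dots> = X + X" by (simp only: M.scale_left_distrib M.scale_one)
  also have "\<dots> = 0" using assms by (metis add.right_inverse)
  finally have "sM 2 X = 0" .
  thus ?thesis by simp
qed

lemma BB_zero: "BBsum = 0"
proof -
  have N1: "1 \<le> N" using N2 by simp
  define X1 where "X1 = (\<Sum>(s,t)\<in>P2 N. \<Sum>(p,q)\<in>{(p,q)\<in>P2 N. p \<noteq> s \<and> p \<noteq> t \<and> q \<noteq> s \<and> q \<noteq> t}.
       BBt s t (rho t p) (rho t q))"
  have "BBsum = (\<Sum>(s,t)\<in>P2 N. \<Sum>(u,v)\<in>P2 (N-1). BBt s t u v)" unfolding BBsum_def BBt_def ..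
  also have "\<dots> = (\<Sum>(s,t)\<in>P2 N. \<Sum>(p,q)\<in>{(p,q)\<in>P2 N. p \<noteq> t \<and> q \<noteq> t}. BBt s t (rho t p) (rho t q))"
  proof (intro sum.cong refl, clarify)
    fix s t assume "(s,t) \<in> P2 N"
    hence "t \<le> N" by (auto simp: P2_def)
    thus "(\<Sum>(u,v)\<in>P2 (N-1). BBt s t u v) = (\<Sum>(p,q)\<in>{(p,q)\<in>P2 N. p \<noteq> t \<and> q \<noteq> t}. BBt s t (rho t p) (rho t q))"
      using N1 by (intro sum_rm) auto
  qed
  also have "\<dots> = (\<Sum>(s,t)\<in>P2 N. (\<Sum>(p,q)\<in>{(p,q)\<in>P2 N. p \<noteq> s \<and> p \<noteq> t \<and> q \<noteq> s \<and> q \<noteq> t}. BBt s t (rho t p) (rho t q))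
      + ((\<Sum>q\<in>{s<..<t}. BBt s t (rho t s) (rho t q)) + (\<Sum>q\<in>{t<..N}. BBt s t (rho t s) (rho t q))
         + (\<Sum>p<s. BBt s t (rho t p) (rho t s))))"
  proof (intro sum.cong refl, clarify)
    fix s t assume "(s,t) \<in> P2 N"
    hence "s < t" "t \<le> N" by (auto simp: P2_def)
    thus "(\<Sum>(p,q)\<in>{(p,q)\<in>P2 N. p \<noteq> t \<and> q \<noteq> t}. BBt s t (rho t p) (rho t q)) = (\<Sum>(p,q)\<in>{(p,q)\<in>P2 N. p \<noteq> s \<and> p \<noteq> t \<and> q \<noteq> s \<and> q \<noteq> t}. BBt s t (rho t p) (rho t q))
      + ((\<Sum>q\<in>{s<..<t}. BBt s t (rho t s) (rho t q)) + (\<Sum>q\<in>{t<..N}. BBt s t (rho t s) (rho t q))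
         + (\<Sum>p<s. BBt s t (rho t p) (rho t s)))"
      by (rule split_X)
  qed
  also have "\<dots> = X1 + ((\<Sum>(s,t)\<in>P2 N. \<Sum>q\<in>{s<..<t}. BBt s t (rho t s) (rho t q))
       + (\<Sum>(s,t)\<in>P2 N. \<Sum>q\<in>{t<..N}. BBt s t (rho t s) (rho t q))
       + (\<Sum>(s,t)\<in>P2 N. \<Sum>p<s. BBt s t (rho t p) (rho t s)))"
    unfolding X1_def by (simp add: sum.distrib case_prod_beta)
  also have "\<dots> = X1 + ((\<Sum>(a,b,c)\<in>R3 N. BBt a c (rho c a) (rho c b))
       + (\<Sum>(a,b,c)\<in>R3 N. BBt a b (rho b a) (rho b c))
       + (\<Sum>(a,b,c)\<in>R3 N. BBt b c (rho c a) (rho c b)))"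
    unfolding sum_Ta sum_Tb sum_Tc ..
  also have "(\<Sum>(a,b,c)\<in>R3 N. BBt a c (rho c a) (rho c b))
       + (\<Sum>(a,b,c)\<in>R3 N. BBt a b (rho b a) (rho b c))
       + (\<Sum>(a,b,c)\<in>R3 N. BBt b c (rho c a) (rho c b)) = 0"
  proof -
    have "(\<Sum>(a,b,c)\<in>R3 N. BBt a c (rho c a) (rho c b))
       + (\<Sum>(a,b,c)\<in>R3 N. BBt a b (rho b a) (rho b c))
       + (\<Sum>(a,b,c)\<in>R3 N. BBt b c (rho c a) (rho c b))
       = (\<Sum>(a,b,c)\<in>R3 N. BBt a b (rho b a) (rho b c) + BBt a c (rho c a) (rho c b) + BBt b c (rho c a) (rho c b))"
      by (simp add: sum.distrib case_prod_beta algebra_simps)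
    also have "\<dots> = 0"
      by (intro sum.neutral ballI) (auto simp: R3_def intro!: E4)
    finally show ?thesis .
  qed
  also have "X1 = 0"
  proof (rule char0_half)
    show "X1 = - X1" unfolding X1_def
      by (rule sum_swap_pairs) (auto simp: P2_def intro!: E3)
  qed
  finally show ?thesis by simp
qed

lemma main_core: "BBsum + BAsum + ABsum + AAsum = 0"
proof -
  have 1: "AAsum + (\<Sum>(s,t)\<in>P2 N. BAt s t s) = 0"
  proof -
    have "AAsum + (\<Sum>(s,t)\<in>P2 N. BAt s t s) = (\<Sum>(a,b)\<in>P2 N. AAt b a + AAt a (b-1) + BAt a b a)"
      unfolding AA_eq by (simp add: sum.distrib case_prod_beta)
    also have "\<dots> = 0" by (intro sum.neutral ballI) (auto simp: P2_def E1[simplified One_nat_def])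
    finally show ?thesis .
  qed
  have 2: "(\<Sum>(s,t)\<in>P2 N. \<Sum>w\<in>{..N}-{s,t}. BAt s t (rho t w)) + ABsum = 0"
  proof -
    have "(\<Sum>(s,t)\<in>P2 N. \<Sum>w\<in>{..N}-{s,t}. BAt s t (rho t w)) + ABsum
       = (\<Sum>(s,t)\<in>P2 N. \<Sum>w\<in>{..N}-{s,t}. BAt s t (rho t w) + ABt w (rho w s) (rho w t))"
      unfolding AB_eq by (simp add: sum.distrib case_prod_beta)
    also have "\<dots> = 0" by (intro sum.neutral ballI) (auto simp: P2_def intro!: sum.neutral E2)
    finally show ?thesis .
  qed
  have "BBsum + BAsum + ABsum + AAsum = (AAsum + (\<Sum>(s,t)\<in>P2 N. BAt s t s))
     + ((\<Sum>(s,t)\<in>P2 N. \<Sum>w\<in>{..N}-{s,t}. BAt s t (rho t w)) + ABsum)"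
    unfolding BB_zero BA_eq by (simp only: add_ac add_0_left)
  thus ?thesis unfolding 1 2 by simp
qed

end



theorem mainTheorem6:
  fixes sA :: "'k::field_char_0 \<Rightarrow> 'a::ab_group_add \<Rightarrow> 'a"
    and GA :: "'g::ab_group_add \<Rightarrow> 'a set"
    and br :: "'a \<Rightarrow> 'a \<Rightarrow> 'a"
    and eps :: "'g \<Rightarrow> 'g \<Rightarrow> 'k"
    and alpha :: "'a \<Rightarrow> 'a"
    and sM :: "'k \<Rightarrow> 'm::ab_group_add \<Rightarrow> 'm"
    and GM :: "'g \<Rightarrow> 'm set"
    and act :: "'a \<Rightarrow> 'm \<Rightarrow> 'm"
    and beta :: "'m \<Rightarrow> 'm"
    and n r :: nat
    and \<gamma> :: 'g
    and f :: "(nat \<Rightarrow> 'a) \<Rightarrow> 'm"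
    and x :: "nat \<Rightarrow> 'a"
  assumes "color_hom_lie_algebra sA GA br eps alpha"
    and "multiplicative br alpha"
    and "hom_lie_module sA GA br eps alpha sM GM act beta"
    and "n \<ge> 2" and "r \<ge> 1"
    and "cochain_deg sA GA eps sM GM (n - 1) \<gamma> f"
    and "alpha_beta_compatible alpha beta f"
    and "\<forall>i\<le>n. homogeneous GA (x i)"
  shows "coboundary GA br eps alpha sM act r n \<gamma>
           (coboundary GA br eps alpha sM act r (n - 1) \<gamma> f) x = 0"
proof -
  interpret CHL sA GA br eps alpha sM GM act beta
    using assms(1-3) by (rule CHL.intro)
  define d where "d = (\<lambda>k. deg GA (x k))"
  have xdeg: "\<forall>k\<le>n. x k \<in> GA (d k)"
  proof (intro allI impI)
    fix k assume "k \<le> n"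
    then obtain g where "x k \<in> GA g" using assms(8) unfolding homogeneous_def by blast
    thus "x k \<in> GA (d k)" unfolding d_def deg_def by (rule someI)
  qed
  have flin: "\<forall>i<n-1. \<forall>y. Vector_Spaces.linear sA sM (\<lambda>v. f (y(i := v)))"
    using assms(6) unfolding cochain_deg_def by blast
  have fcomp: "\<forall>y. f (alpha \<circ> y) = beta (f y)"
    using assms(7) unfolding alpha_beta_compatible_def by blast
  interpret Core sA GA br eps alpha sM GM act beta n r \<gamma> f x d
    using assms(4,5) flin fcomp xdeg by unfold_locales auto
  interpret A: vector_space sA by (rule vsA)
  have V: "vanish (n-1) f" unfolding vanish_def
  proof (intro allI impI)
    fix y :: "nat \<Rightarrow> 'a" and k assume k: "k < n - 1" "y k = 0"
    have "Vector_Spaces.linear sA sM (\<lambda>v. f (y(k := v)))" using flin k by blast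
    hence "f (y(k := sA 0 0)) = sM 0 (f (y(k := 0)))" unfolding linear_iff by blast
    moreover have "y(k := sA 0 0) = y" using k by auto
    ultimately show "f y = 0" by simp
  qed
  let ?g = "coboundary GA br eps alpha sM act r (n - 1) \<gamma> f"
  have g1: "?g (bracket_args br alpha s t x) = cobD r (n-1) \<gamma> (dbr s t) f (bracket_args br alpha s t x)"
    if st: "(s,t) \<in> P2 n" for s t
  proof -
    from st have st': "s < t" "t \<le> n" by (auto simp: P2_def)
    have "\<forall>k\<le>n-1. bracket_args br alpha s t x k \<in> GA (dbr s t k)"
      using st' xdeg by (auto simp: bracket_args_def dbr_def intro!: alpha_deg br_deg)
    thus ?thesis unfolding cob_eq by (rule cobD_deg[OF V])
  qed
  have g2: "?g (omit_arg s x) = cobD r (n-1) \<gamma> (omit_arg s d) f (omit_arg s x)"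
    if s: "s \<in> {..n}" for s
  proof -
    have "\<forall>k\<le>n-1. omit_arg s x k \<in> GA (omit_arg s d k)"
      using s xdeg assms(4) by (auto simp: omit_arg_def)
    thus ?thesis unfolding cob_eq by (rule cobD_deg[OF V])
  qed
  have "coboundary GA br eps alpha sM act r n \<gamma> ?g x = cobD r n \<gamma> d ?g x"
    unfolding cob_eq d_def ..
  also have "\<dots> = (\<Sum>(s,t)\<in>P2 n. sM (ic2 d s t) (cobD r (n-1) \<gamma> (dbr s t) f (bracket_args br alpha s t x)))
   + (\<Sum>s\<in>{..n}. sM (ic1 d s) (act (Q (x s)) (cobD r (n-1) \<gamma> (omit_arg s d) f (omit_arg s x))))"
    unfolding cobD_alt[of n d ?g x] Q_def using g1 g2
    by (intro arg_cong2[where f="(+)"] sum.cong refl) (auto simp: case_prod_beta)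
  also have "\<dots> = 0" unfolding expand by (rule main_core)
  finally show ?thesis .
qed


end
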